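(* There exist a sub-Finsler free-Carnot group $\mathbb G=\mathbb R^n\times\bigwedge^2(\mathbb R^n)$ of step 2, equipped with an adequate scalar product (induced distance $d_{\mathrm{eu}}$, unit sphere $\mathbb S_{\mathrm{eu}}$ centered at $0_{\mathbb G}$), and numbers $C,\delta_0>0$ such that for every $0<\delta\le\delta_0$ there exists $g_\delta\in\mathbb S_{\mathrm{eu}}\setminus A_\delta$ with the property that for every $\varepsilon>0$ there exists $h_{\varepsilon,\delta}\in\mathbb S_{\mathrm{eu}}$ with $0<d_{\mathrm{eu}}(g_\delta,h_{\varepsilon,\delta})\le\varepsilon$ and $$d_{\mathrm{cc}}(0_{\mathbb G},h_{\varepsilon,\delta})\ge d_{\mathrm{cc}}(0_{\mathbb G},g_\delta)+\frac C\delta\,d_{\mathrm{eu}}(g_\delta,h_{\varepsilon,\delta}).$$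
   Context: Group law: $(x_1,Y_1)*(x_2,Y_2)=(x_1+x_2,Y_1+Y_2+\tfrac12x_1\wedge x_2)$, $v\wedge w=v\otimes w-w\otimes v$. A sub-Finsler structure is a norm on $\mathbb R^n$ extended left-invariantly; horizontal curves from $0_{\mathbb G}$: $\gamma_u(t)=\int_0^tu+\tfrac12\int_0^t(\int_0^su)\wedge u(s)\,ds$, $u\in L^1([0,1],\mathbb R^n)$, length $\int_0^1\lVert u\rVert_{\mathrm{sf}}$; $d_{\mathrm{cc}}$ = infimum of lengths of horizontal curves joining two points. Adequate scalar product: $\mathbb R^n\perp\bigwedge^2(\mathbb R^n)$ and $\langle v_1\wedge w_1,v_2\wedge w_2\rangle=\langle v_1,v_2\rangle\langle w_1,w_2\rangle-\langle v_1,w_2\rangle\langle w_1,v_2\rangle$. $A_\delta=\{p\in\mathbb S_{\mathrm{eu}}:d_{\mathrm{eu}}(p,\mathrm{Abn}(\mathbb G))\le\delta\}$ with $\mathrm{Abn}(\mathbb G)=\bigcup\{\mathcal P\times\bigwedge^2(\mathcal P):\mathcal P\text{ an }(n-2)\text{-dimensional subspace of }\mathbb R^n\}$. *)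

theory Defs
  imports "HOL-Analysis.Analysis"
begin

text \<open>Model: R^n is represented by functions nat => real supported in {..<n};
  the second layer wedge^2(R^n) by antisymmetric matrices nat => nat => real
  supported in {..<n} x {..<n}, via v wedge w = v (x) w - w (x) v.\<close>

definition vecs :: "nat \<Rightarrow> (nat \<Rightarrow> real) set" where
  "vecs n = {x. \<forall>i\<ge>n. x i = 0}"

definition bivecs :: "nat \<Rightarrow> (nat \<Rightarrow> nat \<Rightarrow> real) set" where
  "bivecs n = {Y. (\<forall>i j. Y i j = - Y j i) \<and> (\<forall>i j. n \<le> i \<or> n \<le> j \<longrightarrow> Y i j = 0)}"

definition wedge :: "(nat \<Rightarrow> real) \<Rightarrow> (nat \<Rightarrow> real) \<Rightarrow> (nat \<Rightarrow> nat \<Rightarrow> real)" where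
  "wedge v w = (\<lambda>i j. v i * w j - w i * v j)"

type_synonym gpt = "(nat \<Rightarrow> real) \<times> (nat \<Rightarrow> nat \<Rightarrow> real)"

definition Gcarrier :: "nat \<Rightarrow> gpt set" where
  "Gcarrier n = vecs n \<times> bivecs n"

definition zeroG :: gpt where
  "zeroG = ((\<lambda>_. 0), (\<lambda>_ _. 0))"

definition innerM :: "nat \<Rightarrow> (nat \<Rightarrow> nat \<Rightarrow> real) \<Rightarrow> (nat \<Rightarrow> real) \<Rightarrow> (nat \<Rightarrow> real) \<Rightarrow> real" where
  "innerM n M x y = (\<Sum>i<n. \<Sum>j<n. M i j * x i * y j)"

definition is_scalar_product :: "nat \<Rightarrow> (nat \<Rightarrow> nat \<Rightarrow> real) \<Rightarrow> bool" where
  "is_scalar_product n M \<longleftrightarrow> (\<forall>i j. M i j = M j i) \<and>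
     (\<forall>x\<in>vecs n. x \<noteq> (\<lambda>_. 0) \<longrightarrow> innerM n M x x > 0)"

text \<open>The induced scalar product on wedge^2(R^n): the bilinear extension of
  <v1 wedge w1, v2 wedge w2> = <v1,v2><w1,w2> - <v1,w2><w1,v2>
  (in the matrix model this is half the M-Frobenius product).\<close>
definition innerBiv :: "nat \<Rightarrow> (nat \<Rightarrow> nat \<Rightarrow> real) \<Rightarrow> (nat \<Rightarrow> nat \<Rightarrow> real) \<Rightarrow> (nat \<Rightarrow> nat \<Rightarrow> real) \<Rightarrow> real" where
  "innerBiv n M A B = (1/2) * (\<Sum>i<n. \<Sum>j<n. \<Sum>k<n. \<Sum>l<n. A i j * M i k * M j l * B k l)"

definition innerG :: "nat \<Rightarrow> (nat \<Rightarrow> nat \<Rightarrow> real) \<Rightarrow> gpt \<Rightarrow> gpt \<Rightarrow> real" where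
  "innerG n M p q = innerM n M (fst p) (fst q) + innerBiv n M (snd p) (snd q)"

definition d_eu :: "nat \<Rightarrow> (nat \<Rightarrow> nat \<Rightarrow> real) \<Rightarrow> gpt \<Rightarrow> gpt \<Rightarrow> real" where
  "d_eu n M p q = (let r = ((\<lambda>i. fst p i - fst q i), (\<lambda>i j. snd p i j - snd q i j))
                   in sqrt (innerG n M r r))"

definition S_eu :: "nat \<Rightarrow> (nat \<Rightarrow> nat \<Rightarrow> real) \<Rightarrow> gpt set" where
  "S_eu n M = {p \<in> Gcarrier n. d_eu n M zeroG p = 1}"

definition is_sf_norm :: "nat \<Rightarrow> ((nat \<Rightarrow> real) \<Rightarrow> real) \<Rightarrow> bool" where
  "is_sf_norm n N \<longleftrightarrow>
     (\<forall>x\<in>vecs n. 0 \<le> N x) \<and>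
     (\<forall>x\<in>vecs n. N x = 0 \<longleftrightarrow> x = (\<lambda>_. 0)) \<and>
     (\<forall>c. \<forall>x\<in>vecs n. N (\<lambda>i. c * x i) = \<bar>c\<bar> * N x) \<and>
     (\<forall>x\<in>vecs n. \<forall>y\<in>vecs n. N (\<lambda>i. x i + y i) \<le> N x + N y)"

definition control :: "nat \<Rightarrow> (real \<Rightarrow> nat \<Rightarrow> real) \<Rightarrow> bool" where
  "control n u \<longleftrightarrow> (\<forall>t. u t \<in> vecs n) \<and>
     (\<forall>i<n. (\<lambda>t. u t i) absolutely_integrable_on {0..1})"

definition gamma :: "(real \<Rightarrow> nat \<Rightarrow> real) \<Rightarrow> real \<Rightarrow> gpt" where
  "gamma u t = ((\<lambda>i. integral {0..t} (\<lambda>s. u s i)),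
                (\<lambda>i j. (1/2) * integral {0..t}
                    (\<lambda>s. wedge (\<lambda>k. integral {0..s} (\<lambda>r. u r k)) (u s) i j)))"

definition sf_length :: "((nat \<Rightarrow> real) \<Rightarrow> real) \<Rightarrow> (real \<Rightarrow> nat \<Rightarrow> real) \<Rightarrow> real" where
  "sf_length N u = integral {0..1} (\<lambda>t. N (u t))"

definition d_cc0 :: "nat \<Rightarrow> ((nat \<Rightarrow> real) \<Rightarrow> real) \<Rightarrow> gpt \<Rightarrow> real" where
  "d_cc0 n N p = Inf {sf_length N u | u. control n u \<and> gamma u 1 = p}"

text \<open>Abn(G) = union of P x wedge^2(P) over (n-2)-dimensional subspaces P of R^n;
  P is given by a basis b_0..b_{n-3}, and wedge^2(P) is the span of the b_k wedge b_l.\<close>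
definition Abn :: "nat \<Rightarrow> gpt set" where
  "Abn n = {(x, Y). \<exists>b :: nat \<Rightarrow> nat \<Rightarrow> real.
      (\<forall>k<n-2. b k \<in> vecs n) \<and>
      (\<forall>c. (\<forall>i. (\<Sum>k<n-2. c k * b k i) = 0) \<longrightarrow> (\<forall>k<n-2. c k = 0)) \<and>
      (\<exists>c. x = (\<lambda>i. \<Sum>k<n-2. c k * b k i)) \<and>
      (\<exists>a. Y = (\<lambda>i j. \<Sum>k<n-2. \<Sum>l<n-2. a k l * wedge (b k) (b l) i j))}"

definition A_delta :: "nat \<Rightarrow> (nat \<Rightarrow> nat \<Rightarrow> real) \<Rightarrow> real \<Rightarrow> gpt set" where
  "A_delta n M \<delta> = {p \<in> S_eu n M. Inf (d_eu n M p ` Abn n) \<le> \<delta>}"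

end

theory Submission
  imports Defs
begin


lemma ftc0:
  fixes F f :: "real \<Rightarrow> real"
  assumes "\<And>x. (F has_real_derivative f x) (at x)" "0 \<le> t"
  shows "integral {0..t} f = F t - F 0"
proof -
  have "(f has_integral (F t - F 0)) {0..t}"
    using assms by (intro fundamental_theorem_of_calculus)
      (auto simp: has_real_derivative_iff_has_vector_derivative[symmetric] intro: has_field_derivative_at_within)
  thus ?thesis by (rule integral_unique)
qed

definition ctrl :: "real \<Rightarrow> real \<Rightarrow> real \<Rightarrow> real \<Rightarrow> nat \<Rightarrow> real" where
  "ctrl A b c t = (\<lambda>i. if i=0 then 2*A*(1-t) else if i=1 then 2*b*t else if i=2 then c*(2 - 14*t + 15*t^2) else 0)"
definition Pf :: "real \<Rightarrow> real \<Rightarrow> real \<Rightarrow> real \<Rightarrow> nat \<Rightarrow> real" where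
  "Pf A b c t = (\<lambda>i. if i=0 then A*(2*t - t^2) else if i=1 then b*t^2 else if i=2 then c*(2*t - 7*t^2 + 5*t^3) else 0)"

lemma int_ctrl:
  assumes "0 \<le> t"
  shows "integral {0..t} (\<lambda>s. ctrl A b c s i) = Pf A b c t i"
proof -
  consider "i = 0" | "i = 1" | "i = 2" | "i \<ge> 3" by linarith
  then show ?thesis
  proof cases
    case 1
    have "integral {0..t} (\<lambda>y. 2*A*(1-y)) = (\<lambda>y. A*(2*y - y^2)) t - (\<lambda>y. A*(2*y - y^2)) 0"
      by (rule ftc0[OF _ assms]) (auto intro!: derivative_eq_intros simp: algebra_simps)
    with 1 show ?thesis by (simp add: ctrl_def Pf_def)
  next
    case 2
    have "integral {0..t} (\<lambda>y. 2*b*y) = (\<lambda>y. b*y^2) t - (\<lambda>y. b*y^2) 0"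
      by (rule ftc0[OF _ assms]) (auto intro!: derivative_eq_intros simp: algebra_simps)
    with 2 show ?thesis by (simp add: ctrl_def Pf_def)
  next
    case 3
    have "integral {0..t} (\<lambda>y. c*(2 - 14*y + 15*y^2)) = (\<lambda>y. c*(2*y - 7*y^2 + 5*y^3)) t - (\<lambda>y. c*(2*y - 7*y^2 + 5*y^3)) 0"
      by (rule ftc0[OF _ assms]) (auto intro!: derivative_eq_intros simp: algebra_simps)
    with 3 show ?thesis by (simp add: ctrl_def Pf_def)
  next
    case 4
    then show ?thesis by (simp add: ctrl_def Pf_def)
  qed
qed

lemma W01: "integral {0..1} (\<lambda>s. wedge (Pf A b c s) (ctrl A b c s) 0 1) = 2*A*b/3"
proof -
  have "integral {0..1} (\<lambda>y. wedge (Pf A b c y) (ctrl A b c y) 0 1) = (\<lambda>y. 2*A*b*y^3/3) 1 - (\<lambda>y. 2*A*b*y^3/3) 0"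
    by (rule ftc0) (auto intro!: derivative_eq_intros simp: wedge_def Pf_def ctrl_def algebra_simps power2_eq_square power3_eq_cube)
  thus ?thesis by simp
qed

lemma W02: "integral {0..1} (\<lambda>s. wedge (Pf A b c s) (ctrl A b c s) 0 2) = 0"
proof -
  have "integral {0..1} (\<lambda>y. wedge (Pf A b c y) (ctrl A b c y) 0 2) = (\<lambda>y. A*c*(-4*y^3 + 5*y^4 - y^5)) 1 - (\<lambda>y. A*c*(-4*y^3 + 5*y^4 - y^5)) 0"
    by (rule ftc0) (auto intro!: derivative_eq_intros simp: wedge_def Pf_def ctrl_def algebra_simps power2_eq_square power3_eq_cube eval_nat_numeral)
  thus ?thesis by simp
qed

lemma W12: "integral {0..1} (\<lambda>s. wedge (Pf A b c s) (ctrl A b c s) 1 2) = b*c/3"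
proof -
  have "integral {0..1} (\<lambda>y. wedge (Pf A b c y) (ctrl A b c y) 1 2) = (\<lambda>y. b*c*(-2*y^3/3 + y^5)) 1 - (\<lambda>y. b*c*(-2*y^3/3 + y^5)) 0"
    by (rule ftc0) (auto intro!: derivative_eq_intros simp: wedge_def Pf_def ctrl_def algebra_simps power2_eq_square power3_eq_cube eval_nat_numeral)
  thus ?thesis by simp
qed


lemma W10: "integral {0..1} (\<lambda>y. wedge (Pf A b c y) (ctrl A b c y) 1 0) = -(2*A*b/3)"
proof -
  have "integral {0..1} (\<lambda>y. wedge (Pf A b c y) (ctrl A b c y) 1 0) = (\<lambda>y. -(2*A*b*y^3/3)) 1 - (\<lambda>y. -(2*A*b*y^3/3)) 0"
    by (rule ftc0) (auto intro!: derivative_eq_intros simp: wedge_def Pf_def ctrl_def algebra_simps power2_eq_square power3_eq_cube)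
  thus ?thesis by simp
qed

lemma W20: "integral {0..1} (\<lambda>y. wedge (Pf A b c y) (ctrl A b c y) 2 0) = 0"
proof -
  have "integral {0..1} (\<lambda>y. wedge (Pf A b c y) (ctrl A b c y) 2 0) = (\<lambda>y. -(A*c*(-4*y^3 + 5*y^4 - y^5))) 1 - (\<lambda>y. -(A*c*(-4*y^3 + 5*y^4 - y^5))) 0"
    by (rule ftc0) (auto intro!: derivative_eq_intros simp: wedge_def Pf_def ctrl_def algebra_simps power2_eq_square power3_eq_cube eval_nat_numeral)
  thus ?thesis by simp
qed

lemma W21: "integral {0..1} (\<lambda>y. wedge (Pf A b c y) (ctrl A b c y) 2 1) = -(b*c/3)"
proof -
  have "integral {0..1} (\<lambda>y. wedge (Pf A b c y) (ctrl A b c y) 2 1) = (\<lambda>y. -(b*c*(-2*y^3/3 + y^5))) 1 - (\<lambda>y. -(b*c*(-2*y^3/3 + y^5))) 0"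
    by (rule ftc0) (auto intro!: derivative_eq_intros simp: wedge_def Pf_def ctrl_def algebra_simps power2_eq_square power3_eq_cube eval_nat_numeral)
  thus ?thesis by simp
qed

definition xv :: "real \<Rightarrow> real \<Rightarrow> nat \<Rightarrow> real" where
  "xv A b = (\<lambda>i. if i=0 then A else if i=1 then b else 0)"
definition Ym :: "real \<Rightarrow> real \<Rightarrow> nat \<Rightarrow> nat \<Rightarrow> real" where
  "Ym y z = (\<lambda>i j. if i=0 \<and> j=1 then y else if i=1 \<and> j=0 then -y else
      if i=1 \<and> j=2 then z else if i=2 \<and> j=1 then -z else 0)"
definition pt :: "real \<Rightarrow> real \<Rightarrow> real \<Rightarrow> gpt" where
  "pt A b z = (xv A b, Ym (A*b/3) z)"

lemma gamma_ctrl: "gamma (ctrl A b c) 1 = pt A b (b*c/6)"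
proof -
  have fst: "(\<lambda>i. integral {0..1} (\<lambda>s. ctrl A b c s i)) = xv A b"
    by (rule ext) (simp add: int_ctrl Pf_def xv_def)
  have cong: "integral {0..1} (\<lambda>s. wedge (\<lambda>k. integral {0..s} (\<lambda>r. ctrl A b c r k)) (ctrl A b c s) i j)
      = integral {0..1} (\<lambda>s. wedge (Pf A b c s) (ctrl A b c s) i j)" for i j
    by (rule integral_cong) (simp add: int_ctrl)
  have Z: "integral {0..1} (\<lambda>s. wedge (Pf A b c s) (ctrl A b c s) i j) = 0" if "i \<ge> 3 \<or> j \<ge> 3 \<or> i = j" for i j
  proof -
    have "(\<lambda>s. wedge (Pf A b c s) (ctrl A b c s) i j) = (\<lambda>s. 0)"
      using that by (auto simp: wedge_def Pf_def ctrl_def)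
    thus ?thesis by simp
  qed
  have snd: "(\<lambda>i j. (1/2) * integral {0..1} (\<lambda>s. wedge (\<lambda>k. integral {0..s} (\<lambda>r. ctrl A b c r k)) (ctrl A b c s) i j))
     = Ym (A*b/3) (b*c/6)"
  proof (intro ext)
    fix i j :: nat
    consider "i \<ge> 3 \<or> j \<ge> 3 \<or> i = j" | "i=0 \<and> j=1" | "i=1 \<and> j=0" | "i=0 \<and> j=2" | "i=2 \<and> j=0"
      | "i=1 \<and> j=2" | "i=2 \<and> j=1" by linarith
    then show "(1/2) * integral {0..1} (\<lambda>s. wedge (\<lambda>k. integral {0..s} (\<lambda>r. ctrl A b c r k)) (ctrl A b c s) i j)
      = Ym (A*b/3) (b*c/6) i j"
      by cases (auto simp: cong Z W01 W10 W02 W20 W12 W21 W01[unfolded One_nat_def] W10[unfolded One_nat_def] W12[unfolded One_nat_def] W21[unfolded One_nat_def] Ym_def)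
  qed
  show ?thesis unfolding gamma_def pt_def using fst snd by simp
qed




definition Mid :: "nat \<Rightarrow> nat \<Rightarrow> real" where "Mid = (\<lambda>i j. if i = j then 1 else 0)"
definition Nl1 :: "(nat \<Rightarrow> real) \<Rightarrow> real" where "Nl1 x = \<bar>x 0\<bar> + \<bar>x 1\<bar> + \<bar>x 2\<bar>"

lemma sum3: fixes f :: "nat \<Rightarrow> real" shows "(\<Sum>i<3. f i) = f 0 + f 1 + f 2"
  by (simp add: eval_nat_numeral)

lemma innerM3: "innerM 3 Mid x y = x 0*y 0 + x 1*y 1 + x 2*y 2"
  by (simp add: innerM_def sum3 Mid_def)

lemma innerBiv3: "innerBiv 3 Mid A B = (1/2) * (A 0 0 * B 0 0 + A 0 1 * B 0 1 + A 0 2 * B 0 2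
   + A 1 0 * B 1 0 + A 1 1 * B 1 1 + A 1 2 * B 1 2 + A 2 0 * B 2 0 + A 2 1 * B 2 1 + A 2 2 * B 2 2)"
  by (simp add: innerBiv_def sum3 Mid_def algebra_simps)

lemma vecs3: "x \<in> vecs 3 \<Longrightarrow> x = (\<lambda>_. 0) \<longleftrightarrow> x 0 = 0 \<and> x 1 = 0 \<and> x 2 = 0"
proof
  assume "x \<in> vecs 3" "x 0 = 0 \<and> x 1 = 0 \<and> x 2 = 0"
  then show "x = (\<lambda>_. 0)"
    apply (intro ext)
    subgoal for i by (cases "i < 3") (auto simp: vecs_def eval_nat_numeral less_Suc_eq)
    done
qed auto

lemma sp3: "is_scalar_product 3 Mid"
proof -
  have "innerM 3 Mid x x > 0" if "x \<in> vecs 3" "x \<noteq> (\<lambda>_. 0)" for x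
  proof -
    have "x 0 \<noteq> 0 \<or> x 1 \<noteq> 0 \<or> x 2 \<noteq> 0" using vecs3 that by blast
    then show ?thesis unfolding innerM3 using zero_less_power2[of "x 0"] zero_less_power2[of "x 1"] zero_less_power2[of "x 2"]
      zero_le_power2[of "x 0"] zero_le_power2[of "x 1"] zero_le_power2[of "x 2"] by (auto simp: power2_eq_square)
  qed
  then show ?thesis by (auto simp: is_scalar_product_def Mid_def)
qed

lemma sf3: "is_sf_norm 3 Nl1"
  unfolding is_sf_norm_def
proof (intro conjI ballI allI)
  fix x assume x: "x \<in> vecs 3"
  show "0 \<le> Nl1 x" by (simp add: Nl1_def)
  show "(Nl1 x = 0) = (x = (\<lambda>_. 0))" using vecs3[OF x] by (auto simp: Nl1_def)
  fix c show "Nl1 (\<lambda>i. c * x i) = \<bar>c\<bar> * Nl1 x" by (simp add: Nl1_def abs_mult algebra_simps)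
next
  fix x y :: "nat \<Rightarrow> real"
  show "Nl1 (\<lambda>i. x i + y i) \<le> Nl1 x + Nl1 y" by (simp add: Nl1_def abs_triangle_ineq add_mono)
qed

lemma pt_G: "pt A b z \<in> Gcarrier 3"
  by (auto simp: pt_def Gcarrier_def vecs_def bivecs_def xv_def Ym_def)

lemma deu_pt: "d_eu 3 Mid (pt A b z) (pt A' b' z') =
   sqrt ((A-A')^2 + (b-b')^2 + (A*b/3 - A'*b'/3)^2 + (z-z')^2)"
  by (simp add: d_eu_def innerG_def innerM3 innerBiv3 pt_def xv_def Ym_def power2_eq_square algebra_simps)

lemma deu0_pt: "d_eu 3 Mid zeroG (pt A b z) = sqrt (A^2 + b^2 + (A*b/3)^2 + z^2)"
  by (simp add: d_eu_def innerG_def innerM3 innerBiv3 pt_def xv_def Ym_def zeroG_def power2_eq_square algebra_simps)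

lemma Abn3: "p \<in> Abn 3 \<Longrightarrow> snd p = (\<lambda>i j. 0)"
  by (auto simp: Abn_def wedge_def)

lemma Abn3_ne: "zeroG \<in> Abn 3"
  unfolding Abn_def zeroG_def
  apply (simp)
  apply (rule exI[of _ "\<lambda>k i. if i = 0 then 1 else 0"])
  apply (auto simp: vecs_def wedge_def)
  apply (rule exI[of _ "\<lambda>k. 0"]) apply simp
  done

lemma deu_Abn: assumes "p \<in> Abn 3" shows "d_eu 3 Mid (pt A b z) p \<ge> \<bar>A*b/3\<bar>"
proof -
  obtain x where p: "p = (x, \<lambda>i j. 0)" using Abn3[OF assms] by (metis prod.collapse)
  have "d_eu 3 Mid (pt A b z) p = sqrt ((A - x 0)^2 + (b - x 1)^2 + (x 2)^2 + ((A*b/3)^2 + z^2))"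
    by (simp add: p d_eu_def innerG_def innerM3 innerBiv3 pt_def xv_def Ym_def power2_eq_square algebra_simps)
  also have "\<dots> \<ge> sqrt ((A*b/3)^2)" by (intro real_sqrt_le_mono) auto
  finally show ?thesis by simp
qed




lemma alg_lower:
  fixes A b z T0 T1 T2 :: real
  assumes "A \<le> T0" "b \<le> T1" "0 \<le> T2" "z \<le> T1 * T2" "0 < b" "0 < z" "z \<le> 2*b^2"
  shows "A + b + z/(2*b) \<le> T0 + T1 + T2"
proof (cases "T1 \<ge> 2*b")
  case True
  have "z/(2*b) \<le> b" using assms by (simp add: divide_le_eq power2_eq_square)
  then show ?thesis using assms True by linarith
next
  case False
  have "T1 * T2 \<le> (2*b) * T2" using False assms(3) by (intro mult_right_mono) auto
  then have "z \<le> 2*b*T2" using assms(4) by linarith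
  hence "z/(2*b) \<le> T2" using assms by (simp add: divide_le_eq mult.commute)
  then show ?thesis using assms by linarith
qed

lemma int_abs_le:
  fixes f g :: "real \<Rightarrow> real"
  assumes "f integrable_on S" "g integrable_on S" "\<And>x. x \<in> S \<Longrightarrow> \<bar>f x\<bar> \<le> g x"
  shows "\<bar>integral S f\<bar> \<le> integral S g"
  using integral_norm_bound_integral[of f S g] assms by simp

lemma cm_int: "f integrable_on S \<Longrightarrow> (\<lambda>x. (c::real) * f x) integrable_on S"
  using integrable_cmul[of f S c] by simp

lemma lower:
  assumes ctl: "control 3 u" and gam: "gamma u 1 = pt A b z" and b: "b > 0" and z: "z > 0" "z \<le> 2*b^2"
  shows "A + b + z/(2*b) \<le> sf_length Nl1 u"
proof -
  define T where "T k = integral {0..1} (\<lambda>t. \<bar>u t k\<bar>)" for k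
  have ai: "(\<lambda>t. u t k) integrable_on {0..1} \<and> (\<lambda>t. \<bar>u t k\<bar>) integrable_on {0..1}" if "k < 3" for k
    using ctl that unfolding control_def by (auto simp: absolutely_integrable_on_def)
  have i0: "(\<lambda>t. u t 0) integrable_on {0..1}" "(\<lambda>t. \<bar>u t 0\<bar>) integrable_on {0..1}" using ai[of 0] by auto
  have i1: "(\<lambda>t. u t 1) integrable_on {0..1}" "(\<lambda>t. \<bar>u t 1\<bar>) integrable_on {0..1}" using ai[of 1] by auto
  have i2: "(\<lambda>t. u t 2) integrable_on {0..1}" "(\<lambda>t. \<bar>u t 2\<bar>) integrable_on {0..1}" using ai[of 2] by auto
  have len: "sf_length Nl1 u = T 0 + T 1 + T 2"
    unfolding sf_length_def Nl1_def T_def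
    using i0 i1 i2 by (simp add: integral_add integrable_add)
  have fstg: "integral {0..1} (\<lambda>s. u s k) = xv A b k" for k
    using arg_cong[OF gam, of fst] unfolding gamma_def pt_def by (metis fst_conv)
  have sndg0: "snd (gamma u 1) 1 2 = snd (pt A b z) 1 2" using gam by simp
  have sndg: "(1/2) * integral {0..1} (\<lambda>s. wedge (\<lambda>k. integral {0..s} (\<lambda>r. u r k)) (u s) 1 2) = z"
    using sndg0 unfolding gamma_def pt_def by (simp add: Ym_def)
  have bnd: "\<bar>integral {0..1} (\<lambda>s. u s k)\<bar> \<le> T k" if "k < 3" for k
    unfolding T_def using ai[OF that] by (intro int_abs_le) auto
  have A0: "A \<le> T 0" using bnd[of 0] fstg[of 0] by (simp add: xv_def)
  have B1: "b \<le> T 1" using bnd[of 1] fstg[of 1] by (simp add: xv_def)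
  have T2: "0 \<le> T 2" unfolding T_def by (rule integral_nonneg) (use i2 in auto)
  have Xb: "\<bar>integral {0..s} (\<lambda>r. u r k)\<bar> \<le> T k" if "k < 3" "s \<in> {0..1}" for k s
  proof -
    have sub: "{0..s} \<subseteq> {0..1}" using that by auto
    have "(\<lambda>t. u t k) integrable_on {0..s}" "(\<lambda>t. \<bar>u t k\<bar>) integrable_on {0..s}"
      using ai[OF that(1)] sub integrable_subinterval_real by blast+
    then have "\<bar>integral {0..s} (\<lambda>r. u r k)\<bar> \<le> integral {0..s} (\<lambda>t. \<bar>u t k\<bar>)"
      by (intro int_abs_le) auto
    also have "\<dots> \<le> T k" unfolding T_def
      using ai[OF that(1)] sub \<open>(\<lambda>t. \<bar>u t k\<bar>) integrable_on {0..s}\<close> by (intro integral_subset_le) auto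
    finally show ?thesis .
  qed
  define f where "f s = wedge (\<lambda>k. integral {0..s} (\<lambda>r. u r k)) (u s) 1 2" for s
  have zT: "z \<le> T 1 * T 2"
  proof (cases "f integrable_on {0..1}")
    case True
    have g: "(\<lambda>s. T 1 * \<bar>u s 2\<bar> + T 2 * \<bar>u s 1\<bar>) integrable_on {0..1}"
      using i1 i2 by (intro integrable_add cm_int) auto
    have "\<bar>f s\<bar> \<le> T 1 * \<bar>u s 2\<bar> + T 2 * \<bar>u s 1\<bar>" if "s \<in> {0..1}" for s
    proof -
      have "\<bar>f s\<bar> \<le> \<bar>integral {0..s} (\<lambda>r. u r 1)\<bar> * \<bar>u s 2\<bar> + \<bar>u s 1\<bar> * \<bar>integral {0..s} (\<lambda>r. u r 2)\<bar>"
        unfolding f_def wedge_def by (metis abs_mult abs_triangle_ineq4)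
      also have "\<dots> \<le> T 1 * \<bar>u s 2\<bar> + \<bar>u s 1\<bar> * T 2"
        using Xb[of 1 s] Xb[of 2 s] that by (intro add_mono mult_right_mono mult_left_mono) auto
      finally show ?thesis by (simp add: mult.commute)
    qed
    then have "\<bar>integral {0..1} f\<bar> \<le> integral {0..1} (\<lambda>s. T 1 * \<bar>u s 2\<bar> + T 2 * \<bar>u s 1\<bar>)"
      using True g by (intro int_abs_le) auto
    also have "\<dots> = T 1 * T 2 + T 2 * T 1"
      using i1 i2 unfolding T_def by (simp add: integral_add cm_int)
    finally show ?thesis using sndg unfolding f_def[symmetric] by (simp add: mult.commute)
  next
    case False
    then have "integral {0..1} f = 0" by (rule not_integrable_integral)
    then show ?thesis using sndg z unfolding f_def[symmetric] by simp
  qed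
  show ?thesis unfolding len by (rule alg_lower[OF A0 B1 T2 zT b z])
qed




lemma ctrl_control: "control 3 (ctrl A b c)"
  unfolding control_def
proof (intro conjI allI impI)
  fix t show "ctrl A b c t \<in> vecs 3" by (auto simp: ctrl_def vecs_def)
next
  fix i :: nat assume "i < 3"
  show "(\<lambda>t. ctrl A b c t i) absolutely_integrable_on {0..1}"
    by (rule absolutely_integrable_continuous_real) (cases "i=0"; cases "i=1"; cases "i=2"; auto simp: ctrl_def intro!: continuous_intros)
qed

lemma len_nonneg: "0 \<le> sf_length Nl1 u"
proof (cases "(\<lambda>t. Nl1 (u t)) integrable_on {0..1}")
  case True then show ?thesis unfolding sf_length_def by (rule integral_nonneg) (auto simp: Nl1_def)
next
  case False then show ?thesis unfolding sf_length_def by (simp add: not_integrable_integral)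
qed

lemma len_ctrl0: assumes "0 \<le> A" "0 \<le> b" shows "sf_length Nl1 (ctrl A b 0) = A + b"
proof -
  have "sf_length Nl1 (ctrl A b 0) = integral {0..1} (\<lambda>y. 2*A*(1-y) + 2*b*y)"
    unfolding sf_length_def using assms by (intro integral_cong) (auto simp: Nl1_def ctrl_def)
  also have "\<dots> = (\<lambda>y. A*(2*y - y^2) + b*y^2) 1 - (\<lambda>y. A*(2*y - y^2) + b*y^2) 0"
    by (rule ftc0) (auto intro!: derivative_eq_intros simp: algebra_simps)
  finally show ?thesis by simp
qed

lemma dcc_g: assumes "0 \<le> A" "0 \<le> b" shows "d_cc0 3 Nl1 (pt A b 0) \<le> A + b"
proof -
  have "sf_length Nl1 (ctrl A b 0) \<in> {sf_length Nl1 u | u. control 3 u \<and> gamma u 1 = pt A b 0}"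
    using ctrl_control gamma_ctrl[of A b 0] by auto
  then have "d_cc0 3 Nl1 (pt A b 0) \<le> sf_length Nl1 (ctrl A b 0)"
    unfolding d_cc0_def by (rule cInf_lower) (auto intro: bdd_belowI[where m=0] simp: len_nonneg)
  with len_ctrl0[OF assms] show ?thesis by simp
qed

lemma dcc_h: assumes "b > 0" "z > 0" "z \<le> 2*b^2"
  shows "A + b + z/(2*b) \<le> d_cc0 3 Nl1 (pt A b z)"
proof -
  have "gamma (ctrl A b (6*z/b)) 1 = pt A b z" using gamma_ctrl[of A b "6*z/b"] assms by simp
  then have ne: "{sf_length Nl1 u | u. control 3 u \<and> gamma u 1 = pt A b z} \<noteq> {}"
    using ctrl_control by blast
  show ?thesis unfolding d_cc0_def
    by (rule cInf_greatest[OF ne]) (use lower assms in auto)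
qed




lemma sphere_pt:
  assumes "A^2 * (1 + b^2/9) = 1 - b^2 - z^2"
  shows "pt A b z \<in> S_eu 3 Mid"
proof -
  have "A^2 + b^2 + (A*b/3)^2 + z^2 = 1" using assms by (simp add: power_mult_distrib algebra_simps power2_eq_square)
  then show ?thesis by (simp add: S_eu_def pt_G deu0_pt)
qed

lemma half_lem:
  fixes x :: real assumes "0 \<le> x" "x^2 > 1/4" shows "x > 1/2"
proof (rule ccontr)
  assume "\<not> x > 1/2"
  then have "x^2 \<le> (1/2)^2" using assms by (intro power_mono) auto
  then show False using assms by (simp add: power2_eq_square)
qed

theorem mainTheorem11:
  shows "\<exists>(n::nat) M N (C::real) (\<delta>0::real).
     2 \<le> n \<and> is_scalar_product n M \<and> is_sf_norm n N \<and> 0 < C \<and> 0 < \<delta>0 \<and>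
     (\<forall>\<delta>. 0 < \<delta> \<and> \<delta> \<le> \<delta>0 \<longrightarrow>
        (\<exists>g \<in> S_eu n M - A_delta n M \<delta>.
           \<forall>\<epsilon>>0. \<exists>h \<in> S_eu n M.
              0 < d_eu n M g h \<and> d_eu n M g h \<le> \<epsilon> \<and>
              d_cc0 n N h \<ge> d_cc0 n N g + C / \<delta> * d_eu n M g h))"
proof -
  have main: "\<forall>\<delta>. 0 < \<delta> \<and> \<delta> \<le> 1/100 \<longrightarrow> (\<exists>g\<in>S_eu 3 Mid - A_delta 3 Mid \<delta>. \<forall>\<epsilon>>0. \<exists>h\<in>S_eu 3 Mid.
            0 < d_eu 3 Mid g h \<and> d_eu 3 Mid g h \<le> \<epsilon> \<and>
            d_cc0 3 Nl1 g + 1 / 48 / \<delta> * d_eu 3 Mid g h \<le> d_cc0 3 Nl1 h)"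
  proof (intro allI impI)
  fix \<delta> :: real assume d: "0 < \<delta> \<and> \<delta> \<le> 1/100"
  define b where "b = 6*\<delta>"
  have b0: "0 < b" "b \<le> 6/100" using d by (auto simp: b_def)
  have bb: "b^2 \<le> 36/10000"
  proof -
    have "b^2 \<le> (6/100)^2" using b0 by (intro power_mono) auto
    then show ?thesis by (simp add: power2_eq_square)
  qed
  define q where "q = 1 + b^2/9"
  have q: "1 \<le> q" "q \<le> 2" using bb by (auto simp: q_def)
  define a where "a = sqrt ((1 - b^2)/q)"
  have "0 \<le> 1 - b^2" using bb by linarith
  then have nn: "0 \<le> (1 - b^2)/q" using q by simp
  then have a2: "a^2 = (1 - b^2)/q" unfolding a_def by simp
  have aq: "a^2 * q = 1 - b^2" using a2 q by (simp add: field_simps)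
  have a0: "0 \<le> a" using nn by (simp add: a_def)
  have "q * a^2 \<le> 2 * a^2" using q by (intro mult_right_mono) auto
  then have "a^2 > 1/4" using aq q bb by (simp add: algebra_simps)
  then have ahalf: "a > 1/2" using a0 half_lem by blast
  define g where "g = pt a b 0"
  have gS: "g \<in> S_eu 3 Mid" unfolding g_def by (rule sphere_pt) (use aq in \<open>simp add: q_def\<close>)
  have "Inf (d_eu 3 Mid g ` Abn 3) \<ge> a*b/3"
    using Abn3_ne deu_Abn[of _ a b 0] a0 b0 unfolding g_def
    by (intro cInf_greatest) (auto simp: abs_of_nonneg)
  moreover have "a*b/3 > \<delta>" using ahalf b0 by (simp add: b_def)
  ultimately have gA: "g \<notin> A_delta 3 Mid \<delta>" by (auto simp: A_delta_def)
  have gmem: "g \<in> S_eu 3 Mid - A_delta 3 Mid \<delta>" using gS gA by auto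
  have "\<forall>\<epsilon>>0. \<exists>h\<in>S_eu 3 Mid.
            0 < d_eu 3 Mid g h \<and> d_eu 3 Mid g h \<le> \<epsilon> \<and>
            d_cc0 3 Nl1 g + 1 / 48 / \<delta> * d_eu 3 Mid g h \<le> d_cc0 3 Nl1 h"
  proof (intro allI impI)
    fix \<epsilon> :: real assume e: "0 < \<epsilon>"
    define z where "z = min (\<epsilon>/2) (2*b^2)"
    have z: "0 < z" "z \<le> \<epsilon>/2" "z \<le> 2*b^2" using e b0 by (auto simp: z_def)
    have zs: "z \<le> 72/10000" using z bb by linarith
    have zz: "z^2 \<le> z" using z zs by (simp add: power2_eq_square mult_le_cancel_left1)
    define a' where "a' = sqrt ((1 - b^2 - z^2)/q)"
    have "0 \<le> 1 - b^2 - z^2" using bb zz zs by linarith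
    then have nn': "0 \<le> (1 - b^2 - z^2)/q" using q by simp
    then have a'2: "a'^2 = (1 - b^2 - z^2)/q" unfolding a'_def by simp
    have a'q: "a'^2 * q = 1 - b^2 - z^2" using a'2 q by (simp add: field_simps)
    have a'0: "0 \<le> a'" using nn' by (simp add: a'_def)
    have "q * a'^2 \<le> 2 * a'^2" using q by (intro mult_right_mono) auto
    then have "a'^2 > 1/4" using a'q q bb zz zs by (simp add: algebra_simps)
    then have a'half: "a' > 1/2" using a'0 half_lem by blast
    define h where "h = pt a' b z"
    have hS: "h \<in> S_eu 3 Mid" unfolding h_def by (rule sphere_pt) (use a'q in \<open>simp add: q_def\<close>)
    have diff: "(a - a') * (a + a') * q = z^2" using aq a'q by (simp add: algebra_simps power2_eq_square)
    have pq1: "1 \<le> (a + a') * q"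
    proof -
      have "1 * 1 \<le> (a + a') * q" using ahalf a'half q by (intro mult_mono) auto
      then show ?thesis by simp
    qed
    have diff2: "(a - a') * ((a + a') * q) = z^2" using diff by (simp add: mult.assoc)
    have aa: "0 \<le> a - a'"
    proof -
      have "0 \<le> (a - a') * ((a + a') * q)" using diff2 by simp
      then show ?thesis using pq1 by (simp add: zero_le_mult_iff)
    qed
    have aa2: "a - a' \<le> z"
    proof -
      have "(a - a') * 1 \<le> (a - a') * ((a + a') * q)" using aa pq1 by (intro mult_left_mono)
      then show ?thesis using diff2 zz by simp
    qed
    define D where "D = d_eu 3 Mid g h"
    have Dform: "D = sqrt ((a - a')^2 * q + z^2)"
      unfolding D_def g_def h_def deu_pt q_def by (simp add: algebra_simps power2_eq_square)
    have "0 < (a - a')^2 * q + z^2" using z q by (simp add: add_nonneg_pos)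
    then have Dpos: "0 < D" using Dform by simp
    have "(a - a')^2 * q \<le> z^2 * 2" using aa aa2 q by (intro mult_mono power_mono) auto
    then have "(a - a')^2 * q + z^2 \<le> (2*z)^2" unfolding power2_eq_square using zero_le_square[of z] by linarith
    then have D2: "D \<le> 2*z" unfolding Dform using z by (intro real_le_lsqrt) auto
    have dg: "d_cc0 3 Nl1 g \<le> a + b" unfolding g_def using a0 b0 by (intro dcc_g) auto
    have dh: "a' + b + z/(2*b) \<le> d_cc0 3 Nl1 h" unfolding h_def using b0 z by (intro dcc_h) auto
    have k1: "1/48/\<delta> * D \<le> 1/48/\<delta> * (2*z)" using D2 d by (intro mult_left_mono) auto
    have k2: "1/48/\<delta> * (2*z) = z/(2*b) - z/(24*\<delta>)" using d by (simp add: b_def field_simps)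
    have k3: "z \<le> z/(24*\<delta>)" using d z by (simp add: field_simps)
    have key: "1/48/\<delta> * D \<le> z/(2*b) - (a - a')" using k1 k2 k3 aa2 by linarith
    have "0 < d_eu 3 Mid g h \<and> d_eu 3 Mid g h \<le> \<epsilon> \<and>
          d_cc0 3 Nl1 g + 1 / 48 / \<delta> * d_eu 3 Mid g h \<le> d_cc0 3 Nl1 h"
      using Dpos D2 z dg dh key unfolding D_def[symmetric] by linarith
    then show "\<exists>h\<in>S_eu 3 Mid. 0 < d_eu 3 Mid g h \<and> d_eu 3 Mid g h \<le> \<epsilon> \<and>
          d_cc0 3 Nl1 g + 1 / 48 / \<delta> * d_eu 3 Mid g h \<le> d_cc0 3 Nl1 h"
      using hS by blast
  qed
  then show "\<exists>g\<in>S_eu 3 Mid - A_delta 3 Mid \<delta>. \<forall>\<epsilon>>0. \<exists>h\<in>S_eu 3 Mid.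
            0 < d_eu 3 Mid g h \<and> d_eu 3 Mid g h \<le> \<epsilon> \<and>
            d_cc0 3 Nl1 g + 1 / 48 / \<delta> * d_eu 3 Mid g h \<le> d_cc0 3 Nl1 h"
    using gmem by blast
  qed
  show ?thesis
    apply (rule exI[of _ 3], rule exI[of _ Mid], rule exI[of _ Nl1], rule exI[of _ "1/48"], rule exI[of _ "1/100"])
    using main sp3 sf3 by simp
qed


end
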